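(* Let $F_1,\dots,F_n:\mathbb{R}^d\to\mathbb{R}^d$ with each $F_i$ being $L_i$-Lipschitz, $F=\frac1n\sum_iF_i$, $F(x^* )=0$. Let $v\in\mathbb{R}^n_+$ be a random vector with $\mathbb{E}[v_i]=1$ and $\mathbb{E}[v_i^2]<\infty$ for all $i$, and $F_v(x)=\frac1n\sum_iv_iF_i(x)$. Then for all $x\in\mathbb{R}^d$, $$\mathbb{E}\|(F_v(x)-F_v(x^* ))-(F(x)-F(x^* ))\|^2\le\frac\delta2\|x-x^*\|^2\quad\text{with}\quad\delta=\frac2n\sum_{i=1}^nL_i^2\,\mathbb{E}(v_i^2).$$ If in addition $F$ is $\mu$-quasi strongly monotone, then the same inequality holds with $\delta=\frac2n\sum_{i=1}^nL_i^2\,\mathbb{E}(v_i^2)-2\mu^2$.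
   Context: $L_i$-Lipschitz: $\|F_i(x)-F_i(y)\|\le L_i\|x-y\|$. $\mu$-quasi strongly monotone ($\mu>0$): $\langle F(x),x-x^*\rangle\ge\mu\|x-x^*\|^2$ for all $x$. *)

theory Defs
  imports "HOL-Analysis.Analysis" "HOL-Probability.Probability"
begin

definition quasi_strongly_monotone :: "real \<Rightarrow> ('a::real_inner \<Rightarrow> 'a) \<Rightarrow> 'a \<Rightarrow> bool" where
  "quasi_strongly_monotone \<mu> F xs \<longleftrightarrow> (\<forall>x. inner (F x) (x - xs) \<ge> \<mu> * (norm (x - xs))\<^sup>2)"

end

theory Submission imports Defs begin

lemma avg_norm_sq:
  fixes b :: "nat \<Rightarrow> 'a::real_normed_vector"
  assumes "n > 0"
  shows "(norm ((1 / real n) *\<^sub>R (\<Sum>i<n. b i)))\<^sup>2 \<le> (1 / real n) * (\<Sum>i<n. (norm (b i))\<^sup>2)"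
proof -
  have 1: "norm (\<Sum>i<n. b i) \<le> (\<Sum>i<n. norm (b i))" by (rule norm_sum)
  have 2: "(\<Sum>i<n. norm (b i))\<^sup>2 \<le> real n * (\<Sum>i<n. (norm (b i))\<^sup>2)"
    using Cauchy_Schwarz_ineq_sum[of "\<lambda>i. 1" "\<lambda>i. norm (b i)" "{..<n}"] by simp
  have "(norm (\<Sum>i<n. b i))\<^sup>2 \<le> (\<Sum>i<n. norm (b i))\<^sup>2"
    using 1 by (simp add: power_mono)
  also have "\<dots> \<le> real n * (\<Sum>i<n. (norm (b i))\<^sup>2)" by (rule 2)
  finally have 3: "(norm (\<Sum>i<n. b i))\<^sup>2 \<le> real n * (\<Sum>i<n. (norm (b i))\<^sup>2)" .
  have "(norm ((1 / real n) *\<^sub>R (\<Sum>i<n. b i)))\<^sup>2 = (norm (\<Sum>i<n. b i))\<^sup>2 / (real n)\<^sup>2"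
    by (simp add: power_divide)
  also have "\<dots> \<le> real n * (\<Sum>i<n. (norm (b i))\<^sup>2) / (real n)\<^sup>2"
    using 3 by (simp add: divide_right_mono)
  also have "\<dots> = (1 / real n) * (\<Sum>i<n. (norm (b i))\<^sup>2)"
    using assms by (simp add: power2_eq_square)
  finally show ?thesis .
qed

lemma main_bound:
  fixes M :: "'w measure" and a :: "nat \<Rightarrow> 'a::euclidean_space" and v :: "'w \<Rightarrow> nat \<Rightarrow> real"
  assumes P: "prob_space M" and n: "n > 0"
    and meas: "\<And>i. i < n \<Longrightarrow> (\<lambda>\<omega>. v \<omega> i) \<in> borel_measurable M"
    and mean1: "\<And>i. i < n \<Longrightarrow> integrable M (\<lambda>\<omega>. v \<omega> i) \<and> (\<integral>\<omega>. v \<omega> i \<partial>M) = 1"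
    and sq: "\<And>i. i < n \<Longrightarrow> integrable M (\<lambda>\<omega>. (v \<omega> i)\<^sup>2)"
    and an: "\<And>i. i < n \<Longrightarrow> (norm (a i))\<^sup>2 \<le> c i"
  shows "(\<integral>\<omega>. (norm ((1 / real n) *\<^sub>R (\<Sum>i<n. v \<omega> i *\<^sub>R a i) - (1 / real n) *\<^sub>R (\<Sum>i<n. a i)))\<^sup>2 \<partial>M)
     \<le> (1 / real n) * (\<Sum>i<n. c i * (\<integral>\<omega>. (v \<omega> i)\<^sup>2 \<partial>M)) - (norm ((1 / real n) *\<^sub>R (\<Sum>i<n. a i)))\<^sup>2"
proof -
  interpret prob_space M by (rule P)
  define G where "G = (1 / real n) *\<^sub>R (\<Sum>i<n. a i)"
  define Gv where "Gv = (\<lambda>\<omega>. (1 / real n) *\<^sub>R (\<Sum>i<n. v \<omega> i *\<^sub>R a i))"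
  define B where "B = (\<lambda>\<omega>. (1 / real n) * (\<Sum>i<n. c i * (v \<omega> i)\<^sup>2))"
  have GvM: "Gv \<in> borel_measurable M" unfolding Gv_def
    by (intro borel_measurable_scaleR borel_measurable_const borel_measurable_sum) (auto intro: meas)
  have Bint: "integrable M B" unfolding B_def
    by (intro integrable_mult_right Bochner_Integration.integrable_sum) (auto intro: sq)
  have Gvle: "(norm (Gv \<omega>))\<^sup>2 \<le> B \<omega>" for \<omega>
  proof -
    have "(norm (Gv \<omega>))\<^sup>2 \<le> (1 / real n) * (\<Sum>i<n. (norm (v \<omega> i *\<^sub>R a i))\<^sup>2)"
      unfolding Gv_def by (rule avg_norm_sq[OF n])
    also have "\<dots> \<le> B \<omega>" unfolding B_def
    proof (intro mult_left_mono sum_mono)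
      fix i assume "i \<in> {..<n}"
      then have "(norm (a i))\<^sup>2 \<le> c i" using an by auto
      then have "(v \<omega> i)\<^sup>2 * (norm (a i))\<^sup>2 \<le> (v \<omega> i)\<^sup>2 * c i" by (simp add: mult_left_mono)
      then show "(norm (v \<omega> i *\<^sub>R a i))\<^sup>2 \<le> c i * (v \<omega> i)\<^sup>2"
        by (simp add: power_mult_distrib mult.commute)
    qed simp
    finally show ?thesis .
  qed
  have N2int: "integrable M (\<lambda>\<omega>. (norm (Gv \<omega>))\<^sup>2)"
  proof (rule Bochner_Integration.integrable_bound[OF Bint])
    show "(\<lambda>\<omega>. (norm (Gv \<omega>))\<^sup>2) \<in> borel_measurable M" using GvM by measurable
    show "AE \<omega> in M. norm ((norm (Gv \<omega>))\<^sup>2) \<le> norm (B \<omega>)"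
      using Gvle by (auto intro!: AE_I2 order_trans[OF _ abs_ge_self])
  qed
  have Iint: "integrable M (\<lambda>\<omega>. inner (Gv \<omega>) G)" unfolding Gv_def
    by (simp add: inner_sum_left) (intro integrable_divide Bochner_Integration.integrable_sum integrable_mult_left; auto simp: mean1)
  have Iv: "(\<integral>\<omega>. inner (Gv \<omega>) G \<partial>M) = inner G G"
  proof -
    have "(\<integral>\<omega>. inner (Gv \<omega>) G \<partial>M) = (1 / real n) * (\<Sum>i<n. (\<integral>\<omega>. v \<omega> i \<partial>M) * inner (a i) G)"
      unfolding Gv_def
      apply (simp add: inner_sum_left)
      apply (subst Bochner_Integration.integral_sum)
       apply (auto simp: mean1)
      done
    also have "\<dots> = inner G G" using mean1 unfolding G_def
      by (simp add: inner_sum_left sum_divide_distrib[symmetric])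
    finally show ?thesis .
  qed
  have pw: "(norm (Gv \<omega> - G))\<^sup>2 = (norm (Gv \<omega>))\<^sup>2 - 2 * inner (Gv \<omega>) G + (norm G)\<^sup>2" for \<omega>
    by (simp add: power2_norm_eq_inner inner_diff_left inner_diff_right inner_commute)
  have "(\<integral>\<omega>. (norm (Gv \<omega> - G))\<^sup>2 \<partial>M) = (\<integral>\<omega>. (norm (Gv \<omega>))\<^sup>2 \<partial>M) - 2 * inner G G + (norm G)\<^sup>2"
    unfolding pw using N2int Iint Iv prob_space by simp
  also have "\<dots> = (\<integral>\<omega>. (norm (Gv \<omega>))\<^sup>2 \<partial>M) - (norm G)\<^sup>2"
    by (simp add: power2_norm_eq_inner)
  also have "\<dots> \<le> integral\<^sup>L M B - (norm G)\<^sup>2"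
    using Bochner_Integration.integral_mono[OF N2int Bint Gvle] by simp
  also have "integral\<^sup>L M B = (1 / real n) * (\<Sum>i<n. c i * (\<integral>\<omega>. (v \<omega> i)\<^sup>2 \<partial>M))"
    unfolding B_def by (subst integral_mult_right_zero, subst Bochner_Integration.integral_sum) (auto intro: sq)
  finally show ?thesis unfolding Gv_def G_def .
qed

theorem propositionD1:
  fixes M :: "'w measure"
    and n :: nat
    and Fs :: "nat \<Rightarrow> 'a::euclidean_space \<Rightarrow> 'a"
    and L :: "nat \<Rightarrow> real"
    and v :: "'w \<Rightarrow> nat \<Rightarrow> real"
    and xs :: 'a
    and \<mu> :: real
  defines "F \<equiv> (\<lambda>x. (1 / real n) *\<^sub>R (\<Sum>i<n. Fs i x))"
  defines "Fv \<equiv> (\<lambda>\<omega> x. (1 / real n) *\<^sub>R (\<Sum>i<n. v \<omega> i *\<^sub>R Fs i x))"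
  assumes "prob_space M"
    and "n > 0"
    and lip: "\<And>i. i < n \<Longrightarrow> lipschitz_on (L i) UNIV (Fs i)"
    and root: "F xs = 0"
    and meas: "\<And>i. i < n \<Longrightarrow> (\<lambda>\<omega>. v \<omega> i) \<in> borel_measurable M"
    and nonneg: "\<And>i \<omega>. i < n \<Longrightarrow> \<omega> \<in> space M \<Longrightarrow> v \<omega> i \<ge> 0"
    and mean1: "\<And>i. i < n \<Longrightarrow> integrable M (\<lambda>\<omega>. v \<omega> i) \<and> (\<integral>\<omega>. v \<omega> i \<partial>M) = 1"
    and sq: "\<And>i. i < n \<Longrightarrow> integrable M (\<lambda>\<omega>. (v \<omega> i)\<^sup>2)"
  shows "(\<forall>x. (\<integral>\<omega>. (norm ((Fv \<omega> x - Fv \<omega> xs) - (F x - F xs)))\<^sup>2 \<partial>M)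
            \<le> ((2 / real n) * (\<Sum>i<n. (L i)\<^sup>2 * (\<integral>\<omega>. (v \<omega> i)\<^sup>2 \<partial>M))) / 2 * (norm (x - xs))\<^sup>2)
     \<and> (\<mu> > 0 \<and> quasi_strongly_monotone \<mu> F xs \<longrightarrow>
        (\<forall>x. (\<integral>\<omega>. (norm ((Fv \<omega> x - Fv \<omega> xs) - (F x - F xs)))\<^sup>2 \<partial>M)
            \<le> ((2 / real n) * (\<Sum>i<n. (L i)\<^sup>2 * (\<integral>\<omega>. (v \<omega> i)\<^sup>2 \<partial>M)) - 2 * \<mu>\<^sup>2) / 2
               * (norm (x - xs))\<^sup>2))"
proof -
  have key: "(\<integral>\<omega>. (norm ((Fv \<omega> x - Fv \<omega> xs) - (F x - F xs)))\<^sup>2 \<partial>M)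
     \<le> ((2 / real n) * (\<Sum>i<n. (L i)\<^sup>2 * (\<integral>\<omega>. (v \<omega> i)\<^sup>2 \<partial>M))) / 2 * (norm (x - xs))\<^sup>2
        - (norm (F x))\<^sup>2" for x
  proof -
    define a where "a = (\<lambda>i. Fs i x - Fs i xs)"
    have e1: "Fv \<omega> x - Fv \<omega> xs = (1 / real n) *\<^sub>R (\<Sum>i<n. v \<omega> i *\<^sub>R a i)" for \<omega>
      unfolding Fv_def a_def by (simp add: scaleR_diff_right sum_subtractf)
    have e2: "F x - F xs = (1 / real n) *\<^sub>R (\<Sum>i<n. a i)"
      unfolding F_def a_def by (simp add: scaleR_diff_right sum_subtractf)
    have an: "(norm (a i))\<^sup>2 \<le> (L i)\<^sup>2 * (norm (x - xs))\<^sup>2" if "i < n" for i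
    proof -
      have "norm (a i) \<le> L i * norm (x - xs)"
        using lipschitz_onD[OF lip[OF that], of x xs] unfolding a_def by (simp add: dist_norm)
      moreover have "0 \<le> L i" using lipschitz_on_nonneg[OF lip[OF that]] .
      ultimately have "(norm (a i))\<^sup>2 \<le> (L i * norm (x - xs))\<^sup>2"
        by (intro power_mono) auto
      then show ?thesis by (simp add: power_mult_distrib)
    qed
    have "(\<integral>\<omega>. (norm ((Fv \<omega> x - Fv \<omega> xs) - (F x - F xs)))\<^sup>2 \<partial>M)
      \<le> (1 / real n) * (\<Sum>i<n. ((L i)\<^sup>2 * (norm (x - xs))\<^sup>2) * (\<integral>\<omega>. (v \<omega> i)\<^sup>2 \<partial>M))
         - (norm ((1 / real n) *\<^sub>R (\<Sum>i<n. a i)))\<^sup>2"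
      unfolding e1 e2
      by (rule main_bound[OF \<open>prob_space M\<close> \<open>n > 0\<close> meas mean1 sq an])
    also have "(1 / real n) *\<^sub>R (\<Sum>i<n. a i) = F x" using e2 root by simp
    also have "(1 / real n) * (\<Sum>i<n. ((L i)\<^sup>2 * (norm (x - xs))\<^sup>2) * (\<integral>\<omega>. (v \<omega> i)\<^sup>2 \<partial>M))
       = ((2 / real n) * (\<Sum>i<n. (L i)\<^sup>2 * (\<integral>\<omega>. (v \<omega> i)\<^sup>2 \<partial>M))) / 2 * (norm (x - xs))\<^sup>2"
      by (simp add: sum_distrib_left sum_distrib_right sum_divide_distrib mult_ac)
    finally show ?thesis .
  qed
  have part2: "(\<mu> > 0 \<and> quasi_strongly_monotone \<mu> F xs \<longrightarrow>
        (\<forall>x. (\<integral>\<omega>. (norm ((Fv \<omega> x - Fv \<omega> xs) - (F x - F xs)))\<^sup>2 \<partial>M)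
            \<le> ((2 / real n) * (\<Sum>i<n. (L i)\<^sup>2 * (\<integral>\<omega>. (v \<omega> i)\<^sup>2 \<partial>M)) - 2 * \<mu>\<^sup>2) / 2
               * (norm (x - xs))\<^sup>2))"
  proof (intro impI allI)
    fix x assume h: "\<mu> > 0 \<and> quasi_strongly_monotone \<mu> F xs"
    have "\<mu> * (norm (x - xs))\<^sup>2 \<le> inner (F x) (x - xs)"
      using h unfolding quasi_strongly_monotone_def by auto
    also have "\<dots> \<le> norm (F x) * norm (x - xs)" by (rule norm_cauchy_schwarz)
    finally have c: "\<mu> * (norm (x - xs))\<^sup>2 \<le> norm (F x) * norm (x - xs)" .
    have "\<mu> * norm (x - xs) \<le> norm (F x)"
    proof (cases "norm (x - xs) = 0")
      case True then show ?thesis by simp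
    next
      case False
      then have "0 < norm (x - xs)" by simp
      with c show ?thesis by (simp add: power2_eq_square mult_ac)
    qed
    then have "(\<mu> * norm (x - xs))\<^sup>2 \<le> (norm (F x))\<^sup>2"
      using h by (intro power_mono) auto
    then have "\<mu>\<^sup>2 * (norm (x - xs))\<^sup>2 \<le> (norm (F x))\<^sup>2" by (simp add: power_mult_distrib)
    with key[of x] show "(\<integral>\<omega>. (norm ((Fv \<omega> x - Fv \<omega> xs) - (F x - F xs)))\<^sup>2 \<partial>M)
            \<le> ((2 / real n) * (\<Sum>i<n. (L i)\<^sup>2 * (\<integral>\<omega>. (v \<omega> i)\<^sup>2 \<partial>M)) - 2 * \<mu>\<^sup>2) / 2
               * (norm (x - xs))\<^sup>2"
      by (simp add: left_diff_distrib)
  qed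
  have part1: "\<forall>x. (\<integral>\<omega>. (norm ((Fv \<omega> x - Fv \<omega> xs) - (F x - F xs)))\<^sup>2 \<partial>M)
            \<le> ((2 / real n) * (\<Sum>i<n. (L i)\<^sup>2 * (\<integral>\<omega>. (v \<omega> i)\<^sup>2 \<partial>M))) / 2 * (norm (x - xs))\<^sup>2"
  proof
    fix x show "(\<integral>\<omega>. (norm ((Fv \<omega> x - Fv \<omega> xs) - (F x - F xs)))\<^sup>2 \<partial>M)
            \<le> ((2 / real n) * (\<Sum>i<n. (L i)\<^sup>2 * (\<integral>\<omega>. (v \<omega> i)\<^sup>2 \<partial>M))) / 2 * (norm (x - xs))\<^sup>2"
      using key[of x] by (smt (verit) zero_le_power2)
  qed
  from part1 part2 show ?thesis by blast
qed

end
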